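(* If $S$ is an $\varepsilon$-synchronization string, then $\mathrm{RSD}(S[1,i],S[1,j])>1-\varepsilon$ for any $i<j$.
   Context: $\mathrm{ED}$ is the insertion/deletion edit distance. $S[i,j]$ denotes positions $i$ through $j$, $S[i,j)$ positions $i$ through $j-1$, $S(i,j]=S[i+1,j]$; for $i<1$, $S[i,j]=\bot^{-i+1}S[1,j]$ with $\bot\notin\Sigma$. $\mathrm{RSD}(S,S')=\max_{k>0}\frac{\mathrm{ED}(S(|S|-k,|S|],S'(|S'|-k,|S'|])}{2k}$. A string $S\in\Sigma^n$ is an $\varepsilon$-synchronization string ($0<\varepsilon<1$) if for every $1\le i<j<k\le n+1$, $\mathrm{ED}(S[i,j),S[j,k))>(1-\varepsilon)(k-i)$. *)

theory Defs
  imports Complex_Main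
begin

fun ED :: "'a list \<Rightarrow> 'a list \<Rightarrow> nat" where
  "ED [] ys = length ys"
| "ED xs [] = length xs"
| "ED (x # xs) (y # ys) =
     (if x = y then ED xs ys else Suc (min (ED xs (y # ys)) (ED (x # xs) ys)))"

text \<open>Substring S[i,j) (1-based, positions i..j-1), for 1 <= i <= j <= n+1.\<close>
definition substr :: "'a list \<Rightarrow> nat \<Rightarrow> nat \<Rightarrow> 'a list" where
  "substr S i j = drop (i - 1) (take (j - 1) S)"

definition sync_string :: "real \<Rightarrow> 'a list \<Rightarrow> bool" where
  "sync_string eps S \<longleftrightarrow> 0 < eps \<and> eps < 1 \<and>
     (\<forall>i j k. 1 \<le> i \<and> i < j \<and> j < k \<and> k \<le> length S + 1 \<longrightarrow>
        real (ED (substr S i j) (substr S j k)) > (1 - eps) * real (k - i))"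

text \<open>Suffix S(|S|-k, |S|] of length k, padded on the left with the extra
symbol bottom (represented by None) when k > |S|.\<close>
definition pad_suffix :: "nat \<Rightarrow> 'a list \<Rightarrow> 'a option list" where
  "pad_suffix k S = replicate (k - length S) None @ map Some (drop (length S - k) S)"

text \<open>Relative suffix distance (the maximum exists; we take the supremum).\<close>
definition RSD :: "'a list \<Rightarrow> 'a list \<Rightarrow> real" where
  "RSD S S' = (SUP k\<in>{0<..}. real (ED (pad_suffix k S) (pad_suffix k S')) / (2 * real k))"

end

theory Submission
  imports Defs
begin

lemma len_pad: "length (pad_suffix k S) = k"
  by (simp add: pad_suffix_def)

lemma ED_Nil2[simp]: "ED xs [] = length xs"
  by (cases xs) auto

lemma ED_sym: "ED xs ys = ED ys xs"
  by (induction xs ys rule: ED.induct) (auto simp: min.commute)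

lemma ED_le_len: "ED xs ys \<le> length xs + length ys"
  by (induction xs ys rule: ED.induct) auto

lemma ED_map: "inj f \<Longrightarrow> ED (map f xs) (map f ys) = ED xs ys"
  by (induction xs ys rule: ED.induct) (auto simp: inj_eq)

lemma ED_lip_aux:
  "length xs + length ys = n \<Longrightarrow>
   ED xs (y#ys) \<le> Suc (ED xs ys) \<and> ED xs ys \<le> Suc (ED xs (y#ys))"
proof (induction n arbitrary: xs ys y rule: less_induct)
  case (less n)
  show ?case
  proof (cases xs)
    case Nil then show ?thesis by (simp add: ED_le_len)
  next
    case (Cons x xs')
    have IH: "ED a (c#b) \<le> Suc (ED a b) \<and> ED a b \<le> Suc (ED a (c#b))"
      if "length a + length b < n" for a b :: "'a list" and c
      using less.IH[of "length a + length b" a b c] that by blast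
    have s: "length ys + length xs' < n" "length xs' + length ys < n"
      using less.prems Cons by auto
    have h1: "ED xs' ys \<le> Suc (ED (x#xs') ys)" "ED (x#xs') ys \<le> Suc (ED xs' ys)"
      using IH[OF s(1), of x] by (simp_all only: ED_sym[of xs' ys] ED_sym[of "x#xs'" ys])
    have h3: "ED xs' ys \<le> Suc (ED xs' (y#ys))"
      using IH[OF s(2), of y] by blast
    show ?thesis
    proof (cases "x = y")
      case True then show ?thesis using Cons h1 by simp
    next
      case False
      have e: "ED xs (y#ys) = Suc (min (ED xs' (y#ys)) (ED (x#xs') ys))"
        using Cons False by simp
      show ?thesis unfolding e using Cons h1 h3 by (simp add: min_def)
    qed
  qed
qed

lemma ED_cons_le: "ED xs (y#ys) \<le> Suc (ED xs ys)"
  using ED_lip_aux[OF refl] by (rule conjunct1)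

lemma ED_notin: "a \<notin> set ys \<Longrightarrow> ED (a#xs) ys = Suc (ED xs ys)"
proof (induction ys)
  case Nil then show ?case by simp
next
  case (Cons y ys)
  then show ?case using ED_cons_le[of xs y ys] by auto
qed

lemma ED_rep: "a \<notin> set ys \<Longrightarrow> ED (replicate m a @ xs) ys = m + ED xs ys"
  by (induction m) (auto simp: ED_notin)

theorem lemma16:
  fixes S :: "'a list" and eps :: real and i j :: nat
  assumes "sync_string eps S"
    and "i < j" and "j \<le> length S"
  shows "RSD (take i S) (take j S) > 1 - eps"
proof -
  define k where "k = j - i"
  have kpos: "k > 0" using assms k_def by simp
  have eps: "0 < eps" "eps < 1" and sync: "\<And>a b c. 1 \<le> a \<Longrightarrow> a < b \<Longrightarrow> b < c \<Longrightarrow> c \<le> length S + 1 \<Longrightarrow>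
        real (ED (substr S a b) (substr S b c)) > (1 - eps) * real (c - a)"
    using assms(1) unfolding sync_string_def by auto
  define f where "f = (\<lambda>k. real (ED (pad_suffix k (take i S)) (pad_suffix k (take j S))) / (2 * real k))"
  have bdd: "bdd_above (f ` {0<..})"
  proof (rule bdd_aboveI[where M=1])
    fix x assume "x \<in> f ` {0<..}"
    then obtain m where m: "m > 0" "x = f m" by auto
    have "ED (pad_suffix m (take i S)) (pad_suffix m (take j S)) \<le> 2 * m"
      using ED_le_len[of "pad_suffix m (take i S)" "pad_suffix m (take j S)"]
      by (simp add: len_pad)
    then show "x \<le> 1" using m unfolding f_def
      by (simp add: divide_le_eq)
  qed
  have R: "RSD (take i S) (take j S) \<ge> f k"
    unfolding RSD_def f_def[symmetric] using bdd kpos by (intro cSUP_upper) auto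
  have pj: "pad_suffix k (take j S) = map Some (substr S (i+1) (j+1))"
    using assms k_def by (simp add: pad_suffix_def substr_def)
  have key: "real (ED (pad_suffix k (take i S)) (pad_suffix k (take j S))) > (1 - eps) * (2 * real k)"
  proof (cases "k \<le> i")
    case True
    have pi: "pad_suffix k (take i S) = map Some (substr S (i-k+1) (i+1))"
      using assms True k_def by (simp add: pad_suffix_def substr_def)
    have "real (ED (substr S (i-k+1) (i+1)) (substr S (i+1) (j+1))) > (1 - eps) * real (j+1 - (i-k+1))"
      using True kpos assms k_def by (intro sync) auto
    moreover have "real (j+1 - (i-k+1)) = 2 * real k" using True k_def assms by auto
    ultimately show ?thesis using pi pj by (simp add: ED_map inj_def)
  next
    case False
    have pi: "pad_suffix k (take i S) = replicate (k-i) None @ map Some (substr S 1 (i+1))"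
      using assms False k_def by (simp add: pad_suffix_def substr_def)
    have E: "ED (pad_suffix k (take i S)) (pad_suffix k (take j S))
        = (k - i) + ED (substr S 1 (i+1)) (substr S (i+1) (j+1))"
      unfolding pi pj by (subst ED_rep) (auto simp: ED_map inj_def)
    show ?thesis
    proof (cases "i = 0")
      case True
      have "ED (substr S 1 (i+1)) (substr S (i+1) (j+1)) = k"
        using True assms k_def by (simp add: substr_def)
      then show ?thesis using E True kpos eps by simp
    next
      case i0: False
      have s: "real (ED (substr S 1 (i+1)) (substr S (i+1) (j+1))) > (1 - eps) * real (j+1 - 1)"
        using i0 assms by (intro sync) auto
      have "real (k - i) \<ge> (1 - eps) * real (k - i)" using eps by (intro mult_left_le_one_le) auto
      moreover have "real (k-i) = real k - real i" "real (j+1-1) = real k + real i"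
        using False k_def assms by auto
      ultimately show ?thesis using E s by (simp add: algebra_simps)
    qed
  qed
  have "f k > 1 - eps" unfolding f_def using key kpos by (simp add: pos_less_divide_eq mult.commute)
  then show ?thesis using R by linarith
qed

end
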